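(* Let $S_1$ and $S_2$ be disjoint alphabets, let $A_1$ be a set of factorizations on $S_1$ and $A_2$ a set of factorizations on $S_2$, and let $w$ be a weight on $A_1 * A_2$ which is also a weight on $A_1$ and on $A_2$. Then, whenever the Laguerre series involved are well-defined, \[ f_{A_1*A_2,w}(t) = f_{A_1,w}(t)\cdot f_{A_2,w}(t). \]
   Context: A word on an alphabet $S$ is a finite sequence of letters of $S$; a subword is a consecutive block of letters. A factorization on $S$ is an ordered list $(\phi_1)\cdots(\phi_k)$ of nonempty words on $S$ (its parts); $\mathrm{parts}(\phi)=k$. The empty factorization (no parts) is written $\emptyset$. For $T\subseteq S$, the restriction $\phi|_T$ is the factorization whose parts are the maximal subwords of parts of $\phi$ using only letters of $T$, ordered by occurrence in $\phi$ ($\emptyset$ if there are none). For disjoint alphabets $S_1,S_2$ and sets $A_1,A_2$ of factorizations on them, $A_1*A_2$ is the set of factorizations $\phi$ on $S_1\cup S_2$ with $\phi|_{S_1}\in A_1$ and $\phi|_{S_2}\in A_2$. A weight on a set $A$ of factorizations on $S$ is a function $w$ from $A$ and all restrictions of elements of $A$ into a polynomial ring $\mathbb{R}[x_1,x_2,\ldots]$ with $w(\phi)=w(\phi|_T)\,w(\phi|_{S\setminus T})$ for all $\phi\in A$, $T\subseteq S$. The polynomials $l_k(t)$ are defined by $\sum_{k\ge0}l_k(t)x^k=e^{tx/(1+x)}$. The Laguerre series of $A$ with respect to $w$ is $f_{A,w}(t)=\sum_{\phi\in A}w(\phi)\,l_{\mathrm{parts}(\phi)}(t)$, when well-defined as a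 formal power series. *)

theory Defs
  imports "HOL-Library.Poly_Mapping" "HOL-Computational_Algebra.Formal_Power_Series"
begin

(* Words are lists; factorizations are lists of words.
  Polynomials in R[x_1,x_2,...] are finitely supported maps from monomials
  (exponent vectors nat \<Rightarrow>\<^sub>0 nat) to real coefficients. *)

type_synonym 'a factorization = "'a list list"
type_synonym mpoly = "(nat \<Rightarrow>\<^sub>0 nat) \<Rightarrow>\<^sub>0 real"

definition is_factorization :: "'a set \<Rightarrow> 'a factorization \<Rightarrow> bool" where
  "is_factorization S \<phi> \<longleftrightarrow> (\<forall>p\<in>set \<phi>. p \<noteq> [] \<and> set p \<subseteq> S)"

(* Maximal subwords of a word using only letters of T, in order. *)
fun runs :: "'a set \<Rightarrow> 'a list \<Rightarrow> 'a list list" where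
  "runs T [] = []"
| "runs T [x] = (if x \<in> T then [[x]] else [])"
| "runs T (x # y # xs) =
     (if x \<in> T then
        (if y \<in> T then (case runs T (y # xs) of b # bs \<Rightarrow> (x # b) # bs | [] \<Rightarrow> [[x]])
         else [x] # runs T (y # xs))
      else runs T (y # xs))"

definition restrict :: "'a set \<Rightarrow> 'a factorization \<Rightarrow> 'a factorization" where
  "restrict T \<phi> = concat (map (runs T) \<phi>)"

definition parts :: "'a factorization \<Rightarrow> nat" where
  "parts \<phi> = length \<phi>"

definition star :: "'a set \<Rightarrow> 'a set \<Rightarrow> 'a factorization set \<Rightarrow> 'a factorization set
                     \<Rightarrow> 'a factorization set" where
  "star S1 S2 A1 A2 = {\<phi>. is_factorization (S1 \<union> S2) \<phi> \<and>
                         restrict S1 \<phi> \<in> A1 \<and> restrict S2 \<phi> \<in> A2}"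

definition is_weight :: "'a set \<Rightarrow> 'a factorization set \<Rightarrow> ('a factorization \<Rightarrow> mpoly) \<Rightarrow> bool" where
  "is_weight S A w \<longleftrightarrow>
     (\<forall>\<phi>\<in>A. \<forall>T. T \<subseteq> S \<longrightarrow> w \<phi> = w (restrict T \<phi>) * w (restrict (S - T) \<phi>))"

(* Coefficient of t^j in l_k(t), read off from
  e^{tx/(1+x)} = \<Sum>_j t^j (x/(1+x))^j / j!. *)
definition lag_coeff :: "nat \<Rightarrow> nat \<Rightarrow> real" where
  "lag_coeff k j = fps_nth ((fps_X * inverse (1 + fps_X)) ^ j) k / fact j"

(* Formal power series in x_1,x_2,... and t: coefficient function
  (monomial in the x's) \<Rightarrow> (power of t) \<Rightarrow> real. *)
type_synonym series = "(nat \<Rightarrow>\<^sub>0 nat) \<Rightarrow> nat \<Rightarrow> real"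

definition lag_term_coeff :: "('a factorization \<Rightarrow> mpoly) \<Rightarrow> 'a factorization \<Rightarrow> (nat \<Rightarrow>\<^sub>0 nat) \<Rightarrow> nat \<Rightarrow> real" where
  "lag_term_coeff w \<phi> m j = Poly_Mapping.lookup (w \<phi>) m * lag_coeff (parts \<phi>) j"

definition lag_well_defined :: "'a factorization set \<Rightarrow> ('a factorization \<Rightarrow> mpoly) \<Rightarrow> bool" where
  "lag_well_defined A w \<longleftrightarrow>
     (\<forall>m j. finite {\<phi>\<in>A. lag_term_coeff w \<phi> m j \<noteq> 0})"

definition lag_series :: "'a factorization set \<Rightarrow> ('a factorization \<Rightarrow> mpoly) \<Rightarrow> series" where
  "lag_series A w m j = (\<Sum>\<phi>\<in>{\<phi>\<in>A. lag_term_coeff w \<phi> m j \<noteq> 0}. lag_term_coeff w \<phi> m j)"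

definition series_mult :: "series \<Rightarrow> series \<Rightarrow> series" where
  "series_mult f g m j =
     (\<Sum>(a, b)\<in>{(a, b). a + b = m}. \<Sum>i\<le>j. f a i * g b (j - i))"

end

theory Submission
  imports Defs
begin

definition hh :: "real fps" where "hh = fps_X * inverse (1 + fps_X)"
definition cc :: "nat \<Rightarrow> nat \<Rightarrow> real" where "cc j n = fps_nth (hh ^ j) n"

lemma hh_eq: "hh * (1 + fps_X) = fps_X"
  unfolding hh_def by (simp add: mult.assoc inverse_mult_eq_1)

lemma cc_0_right: "cc j 0 = (if j = 0 then 1 else 0)"
  unfolding cc_def by (simp add: fps_nth_power_0 hh_def)

lemma cc_0_left: "cc 0 n = (if n = 0 then 1 else 0)"
  unfolding cc_def by simp

lemma cc_Suc_Suc: "cc (Suc j) (Suc n) = cc j n - cc (Suc j) n"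
proof -
  have e: "hh ^ Suc j * (1 + fps_X) = fps_X * hh ^ j"
    using hh_eq by (simp add: mult_ac)
  have "fps_nth (hh ^ Suc j * (1 + fps_X)) (Suc n) = fps_nth (hh ^ Suc j) (Suc n) + fps_nth (hh ^ Suc j) n"
    by (simp only: distrib_left mult_1_right fps_add_nth fps_X_mult_right_nth) simp
  moreover have "fps_nth (fps_X * hh ^ j) (Suc n) = fps_nth (hh ^ j) n" by simp
  ultimately have "fps_nth (hh ^ Suc j) (Suc n) + fps_nth (hh ^ Suc j) n = fps_nth (hh ^ j) n"
    using e by metis
  thus ?thesis unfolding cc_def by linarith
qed

lemma lag_coeff_cc: "lag_coeff n j = cc j n / fact j"
  unfolding lag_coeff_def cc_def hh_def by simp

definition alpha :: "nat \<Rightarrow> nat \<Rightarrow> nat \<Rightarrow> real" where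
  "alpha k l m = (\<Sum>i\<le>m. of_nat (m choose i) * cc (Suc i) k * cc (m - i) l)"

definition QQ :: "nat \<Rightarrow> nat \<Rightarrow> nat \<Rightarrow> real" where
  "QQ k l j = (\<Sum>i\<le>j. of_nat (j choose i) * cc i k * cc (j - i) l)"

lemma alpha_0: "alpha 0 l m = 0"
  unfolding alpha_def by (simp add: cc_0_right)

lemma alpha_Suc: "alpha (Suc k) l m = QQ k l m - alpha k l m"
  unfolding alpha_def QQ_def by (simp add: cc_Suc_Suc algebra_simps sum_subtractf)

lemma QQ_0: "QQ k l 0 = (if k = 0 \<and> l = 0 then 1 else 0)"
  unfolding QQ_def by (simp add: cc_0_left)

lemma pascal_sum:
  fixes f g :: "nat \<Rightarrow> real"
  shows "(\<Sum>i\<le>Suc m. of_nat (Suc m choose i) * f i * g (Suc m - i)) =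
    (\<Sum>i\<le>m. of_nat (m choose i) * f (Suc i) * g (m - i)) +
    (\<Sum>i\<le>m. of_nat (m choose i) * f i * g (Suc m - i))"
proof -
  have a: "(\<Sum>i\<le>Suc m. of_nat (Suc m choose i) * f i * g (Suc m - i)) =
     f 0 * g (Suc m) + (\<Sum>i\<le>m. of_nat (m choose i) * f (Suc i) * g (m - i))
      + (\<Sum>i\<le>m. of_nat (m choose Suc i) * f (Suc i) * g (m - i))"
    by (subst sum.atMost_Suc_shift) (simp add: algebra_simps sum.distrib)
  have b: "(\<Sum>i\<le>m. of_nat (m choose i) * f i * g (Suc m - i)) =
     (\<Sum>i\<le>Suc m. of_nat (m choose i) * f i * g (Suc m - i))"
    by simp
  also have "\<dots> = f 0 * g (Suc m) + (\<Sum>i\<le>m. of_nat (m choose Suc i) * f (Suc i) * g (m - i))"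
    by (subst sum.atMost_Suc_shift) simp
  finally show ?thesis using a by simp
qed

lemma alpha_swap: "alpha l k m = (\<Sum>i\<le>m. of_nat (m choose i) * cc i k * cc (Suc m - i) l)"
  unfolding alpha_def
  apply (rule sum.reindex_bij_witness[where i="\<lambda>i. m - i" and j="\<lambda>i. m - i"])
  apply (auto simp: Suc_diff_le binomial_symmetric[symmetric])
  done

lemma QQ_Suc: "QQ k l (Suc m) = alpha k l m + alpha l k m"
  unfolding QQ_def alpha_swap[of l k m] by (subst pascal_sum) (simp add: alpha_def)

lemma runs_Cons_out: "x \<notin> T \<Longrightarrow> runs T (x # xs) = runs T xs"
  by (cases xs) auto

lemma runs_app_out: "set u \<inter> T = {} \<Longrightarrow> runs T (u @ q) = runs T q"
  by (induction u) (auto simp: runs_Cons_out)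

lemma runs_app_in: "u \<noteq> [] \<Longrightarrow> set u \<subseteq> T \<Longrightarrow> (q = [] \<or> hd q \<notin> T) \<Longrightarrow>
    runs T (u @ q) = u # runs T q"
proof (induction u)
  case Nil then show ?case by simp
next
  case (Cons x u)
  note IH = Cons.IH and pr = Cons.prems
  show ?case
  proof (cases u)
    case Nil
    then show ?thesis using pr by (cases q) auto
  next
    case (Cons y ys)
    have "runs T (u @ q) = u # runs T q" using IH pr Cons by auto
    then show ?thesis using pr Cons by auto
  qed
qed

lemma restrict_Nil[simp]: "restrict T [] = []"
  by (simp add: restrict_def)

lemma restrict_Cons[simp]: "restrict T (p # ps) = runs T p @ restrict T ps"
  by (simp add: restrict_def)

definition Fib :: "'a set \<Rightarrow> 'a set \<Rightarrow> 'a factorization \<Rightarrow> 'a factorization \<Rightarrow> 'a factorization set" where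
  "Fib S T A B = {\<phi>. is_factorization (S \<union> T) \<phi> \<and> restrict S \<phi> = A \<and> restrict T \<phi> = B}"

definition FX :: "'a set \<Rightarrow> 'a set \<Rightarrow> 'a factorization \<Rightarrow> 'a factorization \<Rightarrow> 'a factorization set" where
  "FX S T A B = {\<phi> \<in> Fib S T A B. \<phi> \<noteq> [] \<and> hd (hd \<phi>) \<in> S}"

lemma Fib_sym: "Fib T S B A = Fib S T A B"
  unfolding Fib_def by (auto simp: Un_commute)

lemma isF_Cons[simp]: "is_factorization S (p # ps) \<longleftrightarrow> p \<noteq> [] \<and> set p \<subseteq> S \<and> is_factorization S ps"
  by (auto simp: is_factorization_def)

lemma isF_Nil[simp]: "is_factorization S []"
  by (simp add: is_factorization_def)

lemma Fib_split: "Fib S T A B = FX S T A B \<union> FX T S B A \<union> (if A = [] \<and> B = [] then {[]} else {})"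
proof -
  have "\<phi> \<in> FX S T A B \<or> \<phi> \<in> FX T S B A \<or> \<phi> = []" if "\<phi> \<in> Fib S T A B" for \<phi>
  proof (cases \<phi>)
    case (Cons p ps)
    then have "p \<noteq> []" "set p \<subseteq> S \<union> T" using that by (auto simp: Fib_def)
    then have "hd p \<in> S \<or> hd p \<in> T" by (cases p) auto
    then show ?thesis using that Cons Fib_sym[of T S B A] by (auto simp: FX_def)
  qed simp
  moreover have "[] \<in> Fib S T A B \<longleftrightarrow> A = [] \<and> B = []" by (auto simp: Fib_def)
  ultimately show ?thesis using Fib_sym[of T S B A] by (auto simp: FX_def)
qed

lemma FX_disj: "S \<inter> T = {} \<Longrightarrow> FX S T A B \<inter> FX T S B A = {}"
  by (auto simp: FX_def)

lemma decomp_part: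
  assumes "p \<noteq> []" "hd p \<in> S"
  obtains u q where "p = u @ q" "u \<noteq> []" "set u \<subseteq> S" "q = [] \<or> hd q \<notin> S" "set q \<subseteq> set p"
proof -
  let ?u = "takeWhile (\<lambda>x. x \<in> S) p" and ?q = "dropWhile (\<lambda>x. x \<in> S) p"
  have "p = ?u @ ?q" by simp
  moreover have "?u \<noteq> []" using assms by (cases p) auto
  moreover have "set ?u \<subseteq> S" by (auto dest: set_takeWhileD)
  moreover have "?q = [] \<or> hd ?q \<notin> S" using hd_dropWhile by blast
  moreover have "set ?q \<subseteq> set p" by (auto dest: set_dropWhileD)
  ultimately show ?thesis using that by blast
qed

lemma FX_Nil: "S \<inter> T = {} \<Longrightarrow> FX S T [] B = {}"
proof (rule ccontr)
  assume "S \<inter> T = {}" "FX S T [] B \<noteq> {}"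
  then obtain p ps where "p # ps \<in> FX S T [] B" by (auto simp: FX_def neq_Nil_conv)
  then have p: "p \<noteq> []" "hd p \<in> S" "restrict S (p # ps) = []" by (auto simp: FX_def Fib_def)
  obtain u q where "p = u @ q" "u \<noteq> []" "set u \<subseteq> S" "q = [] \<or> hd q \<notin> S"
    using decomp_part[OF p(1,2)] by metis
  then have "runs S p = u # runs S q" using runs_app_in by metis
  then show False using p(3) by simp
qed

lemma FX_Cons:
  assumes disj: "S \<inter> T = {}" and u: "u \<noteq> []" "set u \<subseteq> S"
  shows "FX S T (u # us) B = (\<lambda>\<phi>'. u # \<phi>') ` Fib S T us B \<union> (\<lambda>\<psi>. (u @ hd \<psi>) # tl \<psi>) ` FX T S B us"
proof (intro equalityI subsetI)
  fix \<phi> assume "\<phi> \<in> FX S T (u # us) B"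
  then obtain p rest where \<phi>: "\<phi> = p # rest" and pne: "p \<noteq> []" and hp: "hd p \<in> S"
    and sp: "set p \<subseteq> S \<union> T" and fr: "is_factorization (S \<union> T) rest"
    and r1: "runs S p @ restrict S rest = u # us" and r2: "runs T p @ restrict T rest = B"
    by (auto simp: FX_def Fib_def neq_Nil_conv)
  obtain a q where aq: "p = a @ q" "a \<noteq> []" "set a \<subseteq> S" "q = [] \<or> hd q \<notin> S" "set q \<subseteq> set p"
    using decomp_part[OF pne hp] by metis
  have ra: "runs S p = a # runs S q" using aq runs_app_in by metis
  have rb: "runs T p = runs T q" using aq disj runs_app_out[of a T q] by auto
  have au: "a = u" and us: "us = runs S q @ restrict S rest" using r1 ra by auto
  show "\<phi> \<in> (\<lambda>\<phi>'. u # \<phi>') ` Fib S T us B \<union> (\<lambda>\<psi>. (u @ hd \<psi>) # tl \<psi>) ` FX T S B us"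
  proof (cases q)
    case Nil
    then have "rest \<in> Fib S T us B" using fr us r2 rb by (simp add: Fib_def)
    moreover have "\<phi> = u # rest" using \<phi> aq au Nil by simp
    ultimately show ?thesis by blast
  next
    case (Cons x xs)
    have "hd q \<in> T" using aq sp Cons by auto
    moreover have "is_factorization (T \<union> S) (q # rest)" using fr aq sp Cons by (auto simp: Un_commute)
    ultimately have "q # rest \<in> FX T S B us" using us r2 rb Cons
      by (auto simp: FX_def Fib_def)
    moreover have "\<phi> = (u @ hd (q # rest)) # tl (q # rest)" using \<phi> aq au by simp
    ultimately show ?thesis by blast
  qed
next
  fix \<phi> assume "\<phi> \<in> (\<lambda>\<phi>'. u # \<phi>') ` Fib S T us B \<union> (\<lambda>\<psi>. (u @ hd \<psi>) # tl \<psi>) ` FX T S B us"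
  then show "\<phi> \<in> FX S T (u # us) B"
  proof
    assume "\<phi> \<in> (\<lambda>\<phi>'. u # \<phi>') ` Fib S T us B"
    then obtain \<phi>' where \<phi>: "\<phi> = u # \<phi>'" and f: "\<phi>' \<in> Fib S T us B" by blast
    have "runs S u = [u]" using runs_app_in[OF u, of "[]"] by simp
    moreover have "runs T u = []" using runs_app_out[of u T "[]"] u disj by auto
    ultimately show ?thesis using \<phi> f u by (cases u) (auto simp: FX_def Fib_def)
  next
    assume "\<phi> \<in> (\<lambda>\<psi>. (u @ hd \<psi>) # tl \<psi>) ` FX T S B us"
    then obtain q rest where \<phi>: "\<phi> = (u @ q) # rest" and f: "q # rest \<in> FX T S B us"
      by (auto simp: FX_def neq_Nil_conv)
    have q: "q \<noteq> []" "hd q \<in> T" "set q \<subseteq> S \<union> T" using f by (auto simp: FX_def Fib_def)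
    have "runs S (u @ q) = u # runs S q" using runs_app_in[OF u, of q] q disj by auto
    moreover have "runs T (u @ q) = runs T q" using runs_app_out[of u T q] u disj by auto
    ultimately show ?thesis using \<phi> f u q by (cases u) (auto simp: FX_def Fib_def Un_commute)
  qed
qed

lemma FX_ne: "\<phi> \<in> FX S T A B \<Longrightarrow> \<phi> \<noteq> [] \<and> hd \<phi> \<noteq> []"
  by (auto simp: FX_def Fib_def neq_Nil_conv)

lemma fib_from_fx:
  assumes disj: "S \<inter> T = {}" and f1: "finite (FX S T A B)" and f2: "finite (FX T S B A)"
    and s1: "\<forall>m. (\<Sum>\<phi>\<in>FX S T A B. cc (Suc m) (length \<phi>)) = alpha (length A) (length B) m"
    and s2: "\<forall>m. (\<Sum>\<phi>\<in>FX T S B A. cc (Suc m) (length \<phi>)) = alpha (length B) (length A) m"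
  shows "finite (Fib S T A B) \<and> (\<forall>j. (\<Sum>\<phi>\<in>Fib S T A B. cc j (length \<phi>)) = QQ (length A) (length B) j)"
proof -
  let ?E = "(if A = [] \<and> B = [] then {[]} else {}) :: 'a factorization set"
  have split: "Fib S T A B = FX S T A B \<union> FX T S B A \<union> ?E" by (rule Fib_split)
  have fE: "finite ?E" by simp
  have d1: "FX S T A B \<inter> FX T S B A = {}" using FX_disj[OF disj] .
  have d2: "(FX S T A B \<union> FX T S B A) \<inter> ?E = {}" using FX_ne[of "[]" S T A B] FX_ne[of "[]" T S B A] by auto
  have sumsplit: "(\<Sum>\<phi>\<in>Fib S T A B. g \<phi>) = (\<Sum>\<phi>\<in>FX S T A B. g \<phi>) + (\<Sum>\<phi>\<in>FX T S B A. g \<phi>) + (\<Sum>\<phi>\<in>?E. g \<phi>)" for g :: "'a factorization \<Rightarrow> real"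
    unfolding split using f1 f2 fE d1 d2 by (simp add: sum.union_disjoint)
  have "(\<Sum>\<phi>\<in>Fib S T A B. cc j (length \<phi>)) = QQ (length A) (length B) j" for j
  proof (cases j)
    case 0
    have z1: "(\<Sum>\<phi>\<in>FX S T A B. cc 0 (length \<phi>)) = 0"
      by (rule sum.neutral) (auto simp: cc_0_left dest: FX_ne)
    have z2: "(\<Sum>\<phi>\<in>FX T S B A. cc 0 (length \<phi>)) = 0"
      by (rule sum.neutral) (auto simp: cc_0_left dest: FX_ne)
    show ?thesis unfolding 0 sumsplit z1 z2 by (simp add: QQ_0 cc_0_left)
  next
    case (Suc m)
    show ?thesis using Suc s1 s2 by (simp add: sumsplit QQ_Suc cc_0_right)
  qed
  moreover have "finite (Fib S T A B)" unfolding split using f1 f2 fE by simp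
  ultimately show ?thesis by blast
qed

lemma fx_count:
  assumes "length A + length B = n" "S \<inter> T = {}" "is_factorization S A" "is_factorization T B"
  shows "finite (FX S T A B) \<and> (\<forall>m. (\<Sum>\<phi>\<in>FX S T A B. cc (Suc m) (length \<phi>)) = alpha (length A) (length B) m)"
  using assms
proof (induction n arbitrary: S T A B rule: less_induct)
  case (less n)
  note disj = less.prems(2)
  show ?case
  proof (cases A)
    case Nil
    then show ?thesis using FX_Nil[OF disj] by (simp add: alpha_0)
  next
    case (Cons u us)
    have u: "u \<noteq> []" "set u \<subseteq> S" and fus: "is_factorization S us" using less.prems Cons by auto
    have disj': "T \<inter> S = {}" using disj by blast
    have lt: "length us + length B < n" using less.prems Cons by simp
    note IH1 = less.IH[OF lt refl disj fus less.prems(4)]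
    note IH2 = less.IH[of "length B + length us", OF _ refl disj' less.prems(4) fus]
    have fib: "finite (Fib S T us B) \<and> (\<forall>j. (\<Sum>\<phi>\<in>Fib S T us B. cc j (length \<phi>)) = QQ (length us) (length B) j)"
      using fib_from_fx[OF disj] IH1 IH2 lt by simp
    let ?f = "\<lambda>\<phi>'. u # \<phi>'" and ?g = "\<lambda>\<psi>. (u @ hd \<psi>) # tl \<psi>"
    have eq: "FX S T A B = ?f ` Fib S T us B \<union> ?g ` FX T S B us"
      using FX_Cons[OF disj u] Cons by simp
    have fin2: "finite (FX T S B us)" using IH2 lt by simp
    have inj1: "inj_on ?f (Fib S T us B)" by (auto simp: inj_on_def)
    have inj2: "inj_on ?g (FX T S B us)"
    proof (rule inj_onI)
      fix x y assume "x \<in> FX T S B us" "y \<in> FX T S B us" "?g x = ?g y"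
      then show "x = y" using FX_ne[of x] FX_ne[of y] by (cases x; cases y) auto
    qed
    have disjI: "?f ` Fib S T us B \<inter> ?g ` FX T S B us = {}"
      using FX_ne by fastforce
    have fin: "finite (FX S T A B)" unfolding eq using fib fin2 by simp
    have "(\<Sum>\<phi>\<in>FX S T A B. cc (Suc m) (length \<phi>)) = alpha (length A) (length B) m" for m
    proof -
      have "(\<Sum>\<phi>\<in>FX S T A B. cc (Suc m) (length \<phi>)) =
          (\<Sum>\<phi>\<in>?f ` Fib S T us B. cc (Suc m) (length \<phi>)) + (\<Sum>\<phi>\<in>?g ` FX T S B us. cc (Suc m) (length \<phi>))"
        unfolding eq using fib fin2 disjI by (simp add: sum.union_disjoint)
      also have "(\<Sum>\<phi>\<in>?f ` Fib S T us B. cc (Suc m) (length \<phi>)) = (\<Sum>\<phi>\<in>Fib S T us B. cc m (length \<phi>) - cc (Suc m) (length \<phi>))"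
        using inj1 by (simp add: sum.reindex cc_Suc_Suc)
      also have "\<dots> = QQ (length us) (length B) m - QQ (length us) (length B) (Suc m)"
        using fib by (simp add: sum_subtractf)
      also have "(\<Sum>\<phi>\<in>?g ` FX T S B us. cc (Suc m) (length \<phi>)) = (\<Sum>\<phi>\<in>FX T S B us. cc (Suc m) (length \<phi>))"
        using inj2 by (simp add: sum.reindex) (rule sum.cong, auto dest: FX_ne)
      also have "\<dots> = alpha (length B) (length us) m" using IH2 lt by simp
      finally show ?thesis using Cons by (simp add: QQ_Suc alpha_Suc)
    qed
    then show ?thesis using fin by blast
  qed
qed

lemma finite_summands:
  fixes m :: "nat \<Rightarrow>\<^sub>0 nat"
  shows "finite {a :: nat \<Rightarrow>\<^sub>0 nat. \<exists>b. a + b = m}"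
proof -
  define K where "K = Poly_Mapping.keys m"
  define r where "r = (\<lambda>a :: nat \<Rightarrow>\<^sub>0 nat. FuncSet.restrict (Poly_Mapping.lookup a) K)"
  have sub: "r ` {a. \<exists>b. a + b = m} \<subseteq> PiE K (\<lambda>i. {..Poly_Mapping.lookup m i})"
  proof
    fix f assume "f \<in> r ` {a. \<exists>b. a + b = m}"
    then obtain a b where f: "f = r a" and ab: "a + b = m" by blast
    have "Poly_Mapping.lookup a i \<le> Poly_Mapping.lookup m i" for i using ab by (auto simp: lookup_add)
    then show "f \<in> PiE K (\<lambda>i. {..Poly_Mapping.lookup m i})" using f by (auto simp: r_def)
  qed
  have inj: "inj_on r {a. \<exists>b. a + b = m}"
  proof (rule inj_onI)
    fix a a' assume "a \<in> {a. \<exists>b. a + b = m}" "a' \<in> {a. \<exists>b. a + b = m}" and eq: "r a = r a'"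
    then obtain b b' where ab: "a + b = m" "a' + b' = m" by blast
    have "Poly_Mapping.lookup a i = Poly_Mapping.lookup a' i" for i
    proof (cases "i \<in> K")
      case True then show ?thesis using fun_cong[OF eq, of i] by (simp add: r_def)
    next
      case False
      then have "Poly_Mapping.lookup m i = 0" by (simp add: in_keys_iff K_def)
      then show ?thesis using ab by (auto simp: lookup_add dest!: arg_cong[where f="\<lambda>x. Poly_Mapping.lookup x i"])
    qed
    then show "a = a'" by (rule poly_mapping_eqI)
  qed
  have "finite (PiE K (\<lambda>i. {..Poly_Mapping.lookup m i}))" by (rule finite_PiE) (auto simp: K_def)
  then have "finite (r ` {a. \<exists>b. a + b = m})" using sub finite_subset by blast
  then show ?thesis using inj finite_imageD by blast
qed

lemma finite_D: "finite {(a, b). a + b = (m :: nat \<Rightarrow>\<^sub>0 nat)}"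
proof -
  have "{(a, b). a + b = m} \<subseteq> {a. \<exists>b. a + b = m} \<times> {a. \<exists>b. a + b = m}"
    by auto (metis add.commute)
  then show ?thesis using finite_summands finite_subset by blast
qed

lemma lookup_mult_D:
  fixes p q :: mpoly and m :: "nat \<Rightarrow>\<^sub>0 nat"
  shows "Poly_Mapping.lookup (p * q) m = (\<Sum>(a, b)\<in>{(a, b). a + b = m}. Poly_Mapping.lookup p a * Poly_Mapping.lookup q b)"
proof -
  let ?L = "{a :: nat \<Rightarrow>\<^sub>0 nat. \<exists>b. a + b = (m :: nat \<Rightarrow>\<^sub>0 nat)}"
  let ?G = "\<lambda>l. {b. l + b = m}"
  have finG: "finite (?G l)" for l
  proof -
    have "?G l \<subseteq> ?L" by auto (metis add.commute)
    then show ?thesis using finite_summands finite_subset by blast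
  qed
  have inner: "(\<Sum>b. Poly_Mapping.lookup q b when m = l + b) = (\<Sum>b\<in>?G l. Poly_Mapping.lookup q b)" for l
    by (subst Sum_any.expand_superset[OF finG]) (auto intro!: sum.cong)
  have "Poly_Mapping.lookup (p * q) m = (\<Sum>l. Poly_Mapping.lookup p l * (\<Sum>b\<in>?G l. Poly_Mapping.lookup q b))"
    by (simp only: lookup_mult inner)
  also have "\<dots> = (\<Sum>l\<in>?L. Poly_Mapping.lookup p l * (\<Sum>b\<in>?G l. Poly_Mapping.lookup q b))"
  proof (rule Sum_any.expand_superset[OF finite_summands], rule subsetI)
    fix x assume "x \<in> {a. Poly_Mapping.lookup p a * (\<Sum>b\<in>?G a. Poly_Mapping.lookup q b) \<noteq> 0}"
    then have "(\<Sum>b\<in>?G x. Poly_Mapping.lookup q b) \<noteq> 0" by auto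
    then have "?G x \<noteq> {}" by (metis sum.empty)
    then show "x \<in> ?L" by auto
  qed
  also have "\<dots> = (\<Sum>l\<in>?L. \<Sum>b\<in>?G l. Poly_Mapping.lookup p l * Poly_Mapping.lookup q b)"
    by (simp add: sum_distrib_left)
  also have "\<dots> = (\<Sum>(a, b)\<in>Sigma ?L ?G. Poly_Mapping.lookup p a * Poly_Mapping.lookup q b)"
    by (rule sum.Sigma[OF finite_summands]) (simp add: finG)
  also have "Sigma ?L ?G = {(a, b). a + b = m}" by auto
  finally show ?thesis .
qed

lemma fib_count:
  assumes "S \<inter> T = {}" "is_factorization S A" "is_factorization T B"
  shows "finite (Fib S T A B) \<and> (\<forall>j. (\<Sum>\<phi>\<in>Fib S T A B. cc j (length \<phi>)) = QQ (length A) (length B) j)"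
proof -
  have d': "T \<inter> S = {}" using assms(1) by blast
  show ?thesis
    using fib_from_fx[OF assms(1)] fx_count[OF refl assms] fx_count[OF refl d' assms(3,2)] by blast
qed

lemma lag_conv: "(\<Sum>i\<le>j. lag_coeff k i * lag_coeff l (j - i)) = QQ k l j / fact j"
proof -
  have "(\<Sum>i\<le>j. lag_coeff k i * lag_coeff l (j - i)) = (\<Sum>i\<le>j. of_nat (j choose i) * cc i k * cc (j - i) l / fact j)"
  proof (rule sum.cong)
    fix i assume "i \<in> {..j}"
    then have ij: "i \<le> j" by simp
    have "(of_nat (j choose i) :: real) = fact j / (fact i * fact (j - i))"
      using binomial_fact[OF ij] by simp
    then show "lag_coeff k i * lag_coeff l (j - i) = of_nat (j choose i) * cc i k * cc (j - i) l / fact j"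
      by (simp add: lag_coeff_cc field_simps)
  qed simp
  also have "\<dots> = QQ k l j / fact j" unfolding QQ_def by (simp add: sum_divide_distrib)
  finally show ?thesis .
qed

lemma series_on:
  assumes "finite X" "{\<phi>\<in>A. lag_term_coeff w \<phi> a i \<noteq> 0} \<subseteq> X" "X \<subseteq> A"
  shows "lag_series A w a i = (\<Sum>\<phi>\<in>X. lag_term_coeff w \<phi> a i)"
  unfolding lag_series_def
  by (rule sum.mono_neutral_left) (use assms in auto)

theorem theorem2p7:
  fixes S1 S2 :: "'a set"
    and A1 A2 :: "'a factorization set"
    and w :: "'a factorization \<Rightarrow> mpoly"
  assumes "S1 \<inter> S2 = {}"
    and "\<forall>\<phi>\<in>A1. is_factorization S1 \<phi>"
    and "\<forall>\<phi>\<in>A2. is_factorization S2 \<phi>"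
    and "is_weight (S1 \<union> S2) (star S1 S2 A1 A2) w"
    and "is_weight S1 A1 w"
    and "is_weight S2 A2 w"
    and "lag_well_defined (star S1 S2 A1 A2) w"
    and "lag_well_defined A1 w"
    and "lag_well_defined A2 w"
  shows "lag_series (star S1 S2 A1 A2) w = series_mult (lag_series A1 w) (lag_series A2 w)"
proof (intro ext)
  fix m :: "nat \<Rightarrow>\<^sub>0 nat" and j :: nat
  note disj = assms(1) and v1 = assms(2) and v2 = assms(3)
  define Z where "Z = star S1 S2 A1 A2"
  define t where "t = (\<lambda>\<phi> a i. lag_term_coeff w \<phi> a i)"
  define D where "D = {(a, b). a + b = m}"
  define supp where "supp = (\<lambda>A a i. {\<phi>\<in>A. t \<phi> a i \<noteq> 0})"
  have finD: "finite D" unfolding D_def by (rule finite_D)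
  have fsZ: "finite (supp Z a i)" for a i using assms(7) unfolding supp_def t_def Z_def lag_well_defined_def by blast
  have fs1: "finite (supp A1 a i)" for a i using assms(8) unfolding supp_def t_def lag_well_defined_def by blast
  have fs2: "finite (supp A2 a i)" for a i using assms(9) unfolding supp_def t_def lag_well_defined_def by blast
  define P1 where "P1 = restrict S1 ` supp Z m j \<union> (\<Union>ab\<in>D. \<Union>i\<in>{..j}. supp A1 (fst ab) i)"
  define P2 where "P2 = restrict S2 ` supp Z m j \<union> (\<Union>ab\<in>D. \<Union>i\<in>{..j}. supp A2 (snd ab) (j - i))"
  have finP1: "finite P1" unfolding P1_def using fsZ fs1 finD by auto
  have finP2: "finite P2" unfolding P2_def using fsZ fs2 finD by auto
  have P1A: "P1 \<subseteq> A1" unfolding P1_def supp_def Z_def star_def by auto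
  have P2A: "P2 \<subseteq> A2" unfolding P2_def supp_def Z_def star_def by auto
  have wsplit: "w \<phi> = w (restrict S1 \<phi>) * w (restrict S2 \<phi>)" if "\<phi> \<in> Z" for \<phi>
  proof -
    have "(S1 \<union> S2) - S1 = S2" using disj by blast
    then show ?thesis using assms(4) that unfolding is_weight_def Z_def by (metis Un_upper1)
  qed
  have FibZ: "Fib S1 S2 a b = {\<phi>\<in>Z. (restrict S1 \<phi>, restrict S2 \<phi>) = (a, b)}" if "a \<in> A1" "b \<in> A2" for a b
    using that unfolding Fib_def Z_def star_def by auto
  define X where "X = {\<phi>\<in>Z. (restrict S1 \<phi>, restrict S2 \<phi>) \<in> P1 \<times> P2}"
  have Xsub: "X \<subseteq> (\<Union>p\<in>P1 \<times> P2. Fib S1 S2 (fst p) (snd p))"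
    unfolding X_def Z_def star_def Fib_def by auto
  have finX: "finite X"
  proof (rule finite_subset[OF Xsub], rule finite_UN_I)
    show "finite (P1 \<times> P2)" using finP1 finP2 by simp
    fix p assume "p \<in> P1 \<times> P2"
    then have "fst p \<in> A1" "snd p \<in> A2" using P1A P2A by auto
    then show "finite (Fib S1 S2 (fst p) (snd p))" using fib_count[OF disj] v1 v2 by blast
  qed
  have "lag_series Z w m j = (\<Sum>\<phi>\<in>X. t \<phi> m j)"
    unfolding t_def
    by (rule series_on[OF finX]) (auto simp: X_def P1_def P2_def supp_def t_def)
  also have "\<dots> = (\<Sum>p\<in>P1 \<times> P2. \<Sum>\<phi>\<in>{x\<in>X. (restrict S1 x, restrict S2 x) = p}. t \<phi> m j)"
    by (rule sum.group[symmetric]) (use finX finP1 finP2 in \<open>auto simp: X_def\<close>)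
  also have "\<dots> = (\<Sum>p\<in>P1 \<times> P2. Poly_Mapping.lookup (w (fst p) * w (snd p)) m * (QQ (length (fst p)) (length (snd p)) j / fact j))"
  proof (rule sum.cong[OF refl])
    fix p assume pP: "p \<in> P1 \<times> P2"
    obtain a b where p: "p = (a, b)" by fastforce
    have ab: "a \<in> A1" "b \<in> A2" using pP P1A P2A p by auto
    have eqset: "{x\<in>X. (restrict S1 x, restrict S2 x) = p} = Fib S1 S2 a b"
      using FibZ[OF ab] pP p unfolding X_def by auto
    have fc: "finite (Fib S1 S2 a b) \<and> (\<forall>j. (\<Sum>\<phi>\<in>Fib S1 S2 a b. cc j (length \<phi>)) = QQ (length a) (length b) j)"
      using fib_count[OF disj] v1 v2 ab by blast
    have "(\<Sum>\<phi>\<in>Fib S1 S2 a b. t \<phi> m j) = (\<Sum>\<phi>\<in>Fib S1 S2 a b. Poly_Mapping.lookup (w a * w b) m * (cc j (length \<phi>) / fact j))"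
    proof (rule sum.cong[OF refl])
      fix \<phi> assume "\<phi> \<in> Fib S1 S2 a b"
      then have "\<phi> \<in> Z" "restrict S1 \<phi> = a" "restrict S2 \<phi> = b" using FibZ[OF ab] by auto
      then show "t \<phi> m j = Poly_Mapping.lookup (w a * w b) m * (cc j (length \<phi>) / fact j)"
        using wsplit unfolding t_def lag_term_coeff_def parts_def lag_coeff_cc by metis
    qed
    also have "\<dots> = Poly_Mapping.lookup (w a * w b) m * (QQ (length a) (length b) j / fact j)"
      using fc by (simp add: sum_distrib_left[symmetric] sum_divide_distrib[symmetric])
    finally show "(\<Sum>\<phi>\<in>{x\<in>X. (restrict S1 x, restrict S2 x) = p}. t \<phi> m j) =
       Poly_Mapping.lookup (w (fst p) * w (snd p)) m * (QQ (length (fst p)) (length (snd p)) j / fact j)"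
      using eqset p by simp
  qed
  finally have LHS: "lag_series Z w m j = (\<Sum>p\<in>P1 \<times> P2. Poly_Mapping.lookup (w (fst p) * w (snd p)) m * (QQ (length (fst p)) (length (snd p)) j / fact j))" .
  have f1: "lag_series A1 w a i = (\<Sum>\<phi>1\<in>P1. t \<phi>1 a i)" if "(a, b) \<in> D" "i \<le> j" for a b i
    unfolding t_def
    by (rule series_on[OF finP1 _ P1A]) (use that in \<open>force simp: P1_def supp_def t_def\<close>)
  have f2: "lag_series A2 w b (j - i) = (\<Sum>\<phi>2\<in>P2. t \<phi>2 b (j - i))" if "(a, b) \<in> D" "i \<le> j" for a b i
    unfolding t_def
    by (rule series_on[OF finP2 _ P2A]) (use that in \<open>force simp: P2_def supp_def t_def\<close>)
  let ?L = "\<lambda>\<phi>1 \<phi>2 i. lag_coeff (length \<phi>1) i * lag_coeff (length \<phi>2) (j - i)"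
  let ?W = "\<lambda>\<phi>1 \<phi>2 a b. Poly_Mapping.lookup (w \<phi>1) a * Poly_Mapping.lookup (w \<phi>2) b"
  have "series_mult (lag_series A1 w) (lag_series A2 w) m j =
      (\<Sum>(a, b)\<in>D. \<Sum>i\<le>j. \<Sum>\<phi>1\<in>P1. \<Sum>\<phi>2\<in>P2. ?W \<phi>1 \<phi>2 a b * ?L \<phi>1 \<phi>2 i)"
    unfolding series_mult_def D_def[symmetric]
  proof (rule sum.cong[OF refl], clarify)
    fix a b assume ab: "(a, b) \<in> D"
    show "(\<Sum>i\<le>j. lag_series A1 w a i * lag_series A2 w b (j - i)) =
        (\<Sum>i\<le>j. \<Sum>\<phi>1\<in>P1. \<Sum>\<phi>2\<in>P2. ?W \<phi>1 \<phi>2 a b * ?L \<phi>1 \<phi>2 i)"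
    proof (rule sum.cong[OF refl])
      fix i assume "i \<in> {..j}"
      then have ij: "i \<le> j" by simp
      show "lag_series A1 w a i * lag_series A2 w b (j - i) = (\<Sum>\<phi>1\<in>P1. \<Sum>\<phi>2\<in>P2. ?W \<phi>1 \<phi>2 a b * ?L \<phi>1 \<phi>2 i)"
        unfolding f1[OF ab ij] f2[OF ab ij] sum_product
        by (simp add: t_def lag_term_coeff_def parts_def mult_ac)
    qed
  qed
  also have "\<dots> = (\<Sum>(a, b)\<in>D. \<Sum>\<phi>1\<in>P1. \<Sum>\<phi>2\<in>P2. \<Sum>i\<le>j. ?W \<phi>1 \<phi>2 a b * ?L \<phi>1 \<phi>2 i)"
    by (rule sum.cong[OF refl], clarify, subst sum.swap, rule sum.cong[OF refl], rule sum.swap)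
  also have "\<dots> = (\<Sum>\<phi>1\<in>P1. \<Sum>\<phi>2\<in>P2. \<Sum>(a, b)\<in>D. \<Sum>i\<le>j. ?W \<phi>1 \<phi>2 a b * ?L \<phi>1 \<phi>2 i)"
  proof -
    have "(\<Sum>(a, b)\<in>D. \<Sum>\<phi>1\<in>P1. \<Sum>\<phi>2\<in>P2. \<Sum>i\<le>j. ?W \<phi>1 \<phi>2 a b * ?L \<phi>1 \<phi>2 i)
        = (\<Sum>ab\<in>D. \<Sum>\<phi>1\<in>P1. \<Sum>\<phi>2\<in>P2. \<Sum>i\<le>j. ?W \<phi>1 \<phi>2 (fst ab) (snd ab) * ?L \<phi>1 \<phi>2 i)"
      by (rule sum.cong) auto
    also have "\<dots> = (\<Sum>\<phi>1\<in>P1. \<Sum>ab\<in>D. \<Sum>\<phi>2\<in>P2. \<Sum>i\<le>j. ?W \<phi>1 \<phi>2 (fst ab) (snd ab) * ?L \<phi>1 \<phi>2 i)"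
      by (rule sum.swap)
    also have "\<dots> = (\<Sum>\<phi>1\<in>P1. \<Sum>\<phi>2\<in>P2. \<Sum>ab\<in>D. \<Sum>i\<le>j. ?W \<phi>1 \<phi>2 (fst ab) (snd ab) * ?L \<phi>1 \<phi>2 i)"
      by (rule sum.cong[OF refl], rule sum.swap)
    also have "\<dots> = (\<Sum>\<phi>1\<in>P1. \<Sum>\<phi>2\<in>P2. \<Sum>(a, b)\<in>D. \<Sum>i\<le>j. ?W \<phi>1 \<phi>2 a b * ?L \<phi>1 \<phi>2 i)"
      by (intro sum.cong refl) (auto simp: split_def)
    finally show ?thesis .
  qed
  also have "\<dots> = (\<Sum>\<phi>1\<in>P1. \<Sum>\<phi>2\<in>P2. Poly_Mapping.lookup (w \<phi>1 * w \<phi>2) m * (QQ (length \<phi>1) (length \<phi>2) j / fact j))"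
  proof (intro sum.cong[OF refl])
    fix \<phi>1 \<phi>2
    have "(\<Sum>(a, b)\<in>D. \<Sum>i\<le>j. ?W \<phi>1 \<phi>2 a b * ?L \<phi>1 \<phi>2 i) = (\<Sum>(a, b)\<in>D. ?W \<phi>1 \<phi>2 a b) * (\<Sum>i\<le>j. ?L \<phi>1 \<phi>2 i)"
      by (subst sum_product) (auto intro!: sum.cong simp: split_def)
    also have "\<dots> = Poly_Mapping.lookup (w \<phi>1 * w \<phi>2) m * (QQ (length \<phi>1) (length \<phi>2) j / fact j)"
      unfolding D_def lookup_mult_D lag_conv by simp
    finally show "(\<Sum>(a, b)\<in>D. \<Sum>i\<le>j. ?W \<phi>1 \<phi>2 a b * ?L \<phi>1 \<phi>2 i) = Poly_Mapping.lookup (w \<phi>1 * w \<phi>2) m * (QQ (length \<phi>1) (length \<phi>2) j / fact j)" .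
  qed
  also have "\<dots> = (\<Sum>p\<in>P1 \<times> P2. Poly_Mapping.lookup (w (fst p) * w (snd p)) m * (QQ (length (fst p)) (length (snd p)) j / fact j))"
    by (simp add: sum.cartesian_product case_prod_beta)
  finally show "lag_series (star S1 S2 A1 A2) w m j = series_mult (lag_series A1 w) (lag_series A2 w) m j"
    using LHS Z_def by simp
qed

end
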